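(* Let $(G,\cdot)$ be a loop with identity $e$ and $(H,\cdot)$ a non-trivial subloop such that $(xs\cdot z)s=x(sz\cdot s)$ for all $x,z\in G$, $s\in H$. Then the following are equivalent: (a) $J_\rho$ is a second Smarandache semi-automorphism of $G_H$, i.e. $eJ_\rho=e$ and $(sy\cdot s)^\rho=(s^\rho\cdot y^\rho)s^\rho$ for all $y\in G$, $s\in H$; (b) $sy\cdot y^\rho=s$ for all $y\in G$ and $s\in H$.
   Context: Juxtaposition binds more tightly than $\cdot$. $x^\rho$ is the right inverse of $x$ ($xx^\rho=e$), and $J_\rho:G\to G$ is the map $x\mapsto x^\rho$. A second Smarandache semi-automorphism of $G_H$ is a bijection $T$ of $G$ with $HT=H$, $eT=e$ and $(sy\cdot s)T=(sT\cdot yT)sT$ for all $y\in G$, $s\in H$. *)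

theory Defs
  imports Main
begin

definition loop :: "'a set \<Rightarrow> ('a \<Rightarrow> 'a \<Rightarrow> 'a) \<Rightarrow> 'a \<Rightarrow> bool" where
  "loop G m e \<longleftrightarrow> e \<in> G \<and> (\<forall>x\<in>G. \<forall>y\<in>G. m x y \<in> G)
     \<and> (\<forall>x\<in>G. m e x = x \<and> m x e = x)
     \<and> (\<forall>a\<in>G. \<forall>b\<in>G. \<exists>!x. x \<in> G \<and> m a x = b)
     \<and> (\<forall>a\<in>G. \<forall>b\<in>G. \<exists>!y. y \<in> G \<and> m y a = b)"

definition subloop :: "'a set \<Rightarrow> 'a set \<Rightarrow> ('a \<Rightarrow> 'a \<Rightarrow> 'a) \<Rightarrow> 'a \<Rightarrow> bool" where
  "subloop H G m e \<longleftrightarrow> H \<subseteq> G \<and> loop H m e"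

definition rinv :: "'a set \<Rightarrow> ('a \<Rightarrow> 'a \<Rightarrow> 'a) \<Rightarrow> 'a \<Rightarrow> 'a \<Rightarrow> 'a" where
  "rinv G m e x = (THE y. y \<in> G \<and> m x y = e)"

definition second_S_semi_aut ::
  "'a set \<Rightarrow> 'a set \<Rightarrow> ('a \<Rightarrow> 'a \<Rightarrow> 'a) \<Rightarrow> 'a \<Rightarrow> ('a \<Rightarrow> 'a) \<Rightarrow> bool" where
  "second_S_semi_aut G H m e T \<longleftrightarrow> bij_betw T G G \<and> T ` H = H \<and> T e = e
     \<and> (\<forall>y\<in>G. \<forall>s\<in>H. T (m (m s y) s) = m (m (T s) (T y)) (T s))"

end

theory Submission
  imports Defs
begin

theorem theorem3p5:
  fixes G H :: "'a set" and m :: "'a \<Rightarrow> 'a \<Rightarrow> 'a" and e :: 'a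
  assumes "loop G m e"
    and "subloop H G m e"
    and "H \<noteq> {e}" and "H \<noteq> G"
    and "\<forall>x\<in>G. \<forall>z\<in>G. \<forall>s\<in>H. m (m (m x s) z) s = m x (m (m s z) s)"
  shows "second_S_semi_aut G H m e (rinv G m e) \<longleftrightarrow>
         (\<forall>y\<in>G. \<forall>s\<in>H. m (m s y) (rinv G m e y) = s)"
proof -
  let ?r = "rinv G m e"
  note L = assms(1)[unfolded loop_def]
  have eG: "e \<in> G" using L by (rule conjunct1)
  have cl0: "\<forall>x\<in>G. \<forall>y\<in>G. m x y \<in> G" using L[THEN conjunct2, THEN conjunct1] .
  have id0: "\<forall>x\<in>G. m e x = x \<and> m x e = x" using L[THEN conjunct2, THEN conjunct2, THEN conjunct1] .
  have ls0: "\<forall>a\<in>G. \<forall>b\<in>G. \<exists>!x. x \<in> G \<and> m a x = b" using L[THEN conjunct2, THEN conjunct2, THEN conjunct2, THEN conjunct1] .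
  have rs0: "\<forall>a\<in>G. \<forall>b\<in>G. \<exists>!y. y \<in> G \<and> m y a = b" using L[THEN conjunct2, THEN conjunct2, THEN conjunct2, THEN conjunct2] .
  have cl: "\<And>x y. x \<in> G \<Longrightarrow> y \<in> G \<Longrightarrow> m x y \<in> G" using cl0 by blast
  have idl: "\<And>x. x \<in> G \<Longrightarrow> m e x = x" and idr: "\<And>x. x \<in> G \<Longrightarrow> m x e = x" using id0 by auto
  have ls: "\<And>a b. a \<in> G \<Longrightarrow> b \<in> G \<Longrightarrow> \<exists>!x. x \<in> G \<and> m a x = b" using ls0 by blast
  have rs: "\<And>a b. a \<in> G \<Longrightarrow> b \<in> G \<Longrightarrow> \<exists>!y. y \<in> G \<and> m y a = b" using rs0 by blast
  have HG: "H \<subseteq> G" using assms(2) unfolding subloop_def by blast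
  have LH: "loop H m e" using assms(2) unfolding subloop_def by blast
  note LH' = LH[unfolded loop_def]
  have lsH0: "\<forall>a\<in>H. \<forall>b\<in>H. \<exists>!x. x \<in> H \<and> m a x = b" using LH'[THEN conjunct2, THEN conjunct2, THEN conjunct2, THEN conjunct1] .
  have rsH0: "\<forall>a\<in>H. \<forall>b\<in>H. \<exists>!y. y \<in> H \<and> m y a = b" using LH'[THEN conjunct2, THEN conjunct2, THEN conjunct2, THEN conjunct2] .
  have lsH: "\<And>a b. a \<in> H \<Longrightarrow> b \<in> H \<Longrightarrow> \<exists>x. x \<in> H \<and> m a x = b" using lsH0 by blast
  have rsH: "\<And>a b. a \<in> H \<Longrightarrow> b \<in> H \<Longrightarrow> \<exists>y. y \<in> H \<and> m y a = b" using rsH0 by blast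
  have eH: "e \<in> H" using LH' by (rule conjunct1)
  have rcan: "\<And>a b c. a \<in> G \<Longrightarrow> b \<in> G \<Longrightarrow> c \<in> G \<Longrightarrow> m b a = m c a \<Longrightarrow> b = c"
  proof -
    fix a b c assume h: "a \<in> G" "b \<in> G" "c \<in> G" "m b a = m c a"
    have "\<exists>!y. y \<in> G \<and> m y a = m c a" using rs h cl by blast
    then show "b = c" using h by blast
  qed
  have lcan: "\<And>a b c. a \<in> G \<Longrightarrow> b \<in> G \<Longrightarrow> c \<in> G \<Longrightarrow> m a b = m a c \<Longrightarrow> b = c"
  proof -
    fix a b c assume h: "a \<in> G" "b \<in> G" "c \<in> G" "m a b = m a c"
    have "\<exists>!y. y \<in> G \<and> m a y = m a c" using ls h cl by blast
    then show "b = c" using h by blast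
  qed
  have rinv: "\<And>x. x \<in> G \<Longrightarrow> ?r x \<in> G \<and> m x (?r x) = e"
  proof -
    fix x assume "x \<in> G"
    then have "\<exists>!y. y \<in> G \<and> m x y = e" using ls eG by blast
    then show "?r x \<in> G \<and> m x (?r x) = e" unfolding rinv_def by (rule theI')
  qed
  have runiq: "\<And>x y. x \<in> G \<Longrightarrow> y \<in> G \<Longrightarrow> m x y = e \<Longrightarrow> ?r x = y"
  proof -
    fix x y assume h: "x \<in> G" "y \<in> G" "m x y = e"
    show "?r x = y" using lcan[of x "?r x" y] rinv[OF h(1)] h by simp
  qed
  have rH: "\<And>s. s \<in> H \<Longrightarrow> ?r s \<in> H"
  proof -
    fix s assume s: "s \<in> H"
    then obtain y where y: "y \<in> H" "m s y = e" using lsH eH by blast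
    have "?r s = y" using runiq[of s y] y s HG by blast
    then show "?r s \<in> H" using y by simp
  qed
  have Bol: "\<And>x z s. x \<in> G \<Longrightarrow> z \<in> G \<Longrightarrow> s \<in> H \<Longrightarrow> m (m (m x s) z) s = m x (m (m s z) s)"
    using assms(5) by blast
  have inv2: "\<And>x s. x \<in> G \<Longrightarrow> s \<in> H \<Longrightarrow> m (m x s) (?r s) = x"
  proof -
    fix x s assume x: "x \<in> G" and s: "s \<in> H"
    have sG: "s \<in> G" using s HG by auto
    have r: "?r s \<in> G" "m s (?r s) = e" using rinv sG by auto
    have "m (m (m x s) (?r s)) s = m x (m (m s (?r s)) s)" using Bol x r s by blast
    also have "\<dots> = m x s" using r idl sG by simp
    finally show "m (m x s) (?r s) = x" using rcan[of s "m (m x s) (?r s)" x] sG x r cl by blast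
  qed
  have key: "\<And>y s. y \<in> G \<Longrightarrow> s \<in> H \<Longrightarrow>
     (?r (m (m s y) s) = m (m (?r s) (?r y)) (?r s)) \<longleftrightarrow> m (m s y) (?r y) = s"
  proof -
    fix y s assume y: "y \<in> G" and s: "s \<in> H"
    have sG: "s \<in> G" using s HG by auto
    have s'H: "?r s \<in> H" using rH s by auto
    have s'G: "?r s \<in> G" using s'H HG by auto
    have ss': "m s (?r s) = e" using rinv sG by auto
    have y'G: "?r y \<in> G" using rinv y by auto
    define w where "w = m (m s y) s"
    have wG: "w \<in> G" unfolding w_def using cl sG y by auto
    define X where "X = m (m (?r s) (?r y)) (?r s)"
    have XG: "X \<in> G" unfolding X_def using cl s'G y'G by auto
    have ws: "m w (?r s) = m s y" unfolding w_def using inv2 cl sG y s by auto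
    have eq: "m (m (m s y) (?r y)) (?r s) = m w X"
      using Bol[OF wG y'G s'H] ws unfolding X_def by simp
    have "(?r w = X) \<longleftrightarrow> m w X = e" using runiq[OF wG XG] rinv[OF wG] by auto
    also have "\<dots> \<longleftrightarrow> m (m (m s y) (?r y)) (?r s) = e" using eq by simp
    also have "\<dots> \<longleftrightarrow> m (m s y) (?r y) = s"
      using rcan[of "?r s" "m (m s y) (?r y)" s] ss' s'G sG cl y y'G by auto
    finally show "(?r (m (m s y) s) = m (m (?r s) (?r y)) (?r s)) \<longleftrightarrow> m (m s y) (?r y) = s"
      unfolding w_def X_def .
  qed
  have bij: "bij_betw ?r G G"
  proof (rule bij_betwI')
    show "\<And>x y. x \<in> G \<Longrightarrow> y \<in> G \<Longrightarrow> (?r x = ?r y) = (x = y)"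
    proof -
      fix x y assume h: "x \<in> G" "y \<in> G"
      show "(?r x = ?r y) = (x = y)"
      proof
        assume "?r x = ?r y"
        then have "m x (?r y) = m y (?r y)" using rinv h by metis
        then show "x = y" using rcan[of "?r y" x y] rinv h by blast
      qed simp
    qed
    show "\<And>x. x \<in> G \<Longrightarrow> ?r x \<in> G" using rinv by auto
    show "\<And>y. y \<in> G \<Longrightarrow> \<exists>x\<in>G. y = ?r x"
    proof -
      fix y assume y: "y \<in> G"
      then obtain x where "x \<in> G" "m x y = e" using rs eG by blast
      then show "\<exists>x\<in>G. y = ?r x" using runiq[of x y] y by (metis bexI)
    qed
  qed
  have img: "?r ` H = H"
  proof
    show "?r ` H \<subseteq> H" using rH by auto
    show "H \<subseteq> ?r ` H"
    proof
      fix s assume s: "s \<in> H"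
      then obtain x where "x \<in> H" "m x s = e" using rsH eH by blast
      moreover have "?r x = s" using runiq[of x s] \<open>x \<in> H\<close> \<open>m x s = e\<close> s HG by blast
      ultimately show "s \<in> ?r ` H" by (metis image_eqI)
    qed
  qed
  have re: "?r e = e" using runiq[of e e] eG idl by auto
  show ?thesis unfolding second_S_semi_aut_def using bij img re key by auto
qed

end
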